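(* Let $n,m,j,k$ be positive integers with $m\leq2^{n+1}$ and $j,k\leq\left\lfloor\frac{m+1}{4}\right\rfloor$. Then the equation $$(1-2^n)x+(2j-1)2^y=(2k-1)2^z$$ has no integer solutions with $x>0$, $0\leq y<\left\lfloor\log_2\left(\frac{m-1}{2j-1}\right)\right\rfloor$, and $z\geq0$. *)

theory Defs
  imports Complex_Main
begin

end

theory Submission
  imports Defs
begin

theorem lemma4p5:
  fixes n m j k :: nat
  assumes "n > 0" "m > 0" "j > 0" "k > 0"
    and "m \<le> 2 ^ (n + 1)"
    and "int j \<le> \<lfloor>(real m + 1) / 4\<rfloor>"
    and "int k \<le> \<lfloor>(real m + 1) / 4\<rfloor>"
  shows "\<not> (\<exists>(x::int) (y::int) (z::int).
            x > 0 \<and> 0 \<le> y \<and> y < \<lfloor>log 2 ((real m - 1) / (2 * real j - 1))\<rfloor> \<and> z \<ge> 0 \<and>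
            (1 - 2 ^ n) * x + (2 * int j - 1) * 2 ^ nat y = (2 * int k - 1) * 2 ^ nat z)"
proof
  assume "\<exists>(x::int) (y::int) (z::int).
            x > 0 \<and> 0 \<le> y \<and> y < \<lfloor>log 2 ((real m - 1) / (2 * real j - 1))\<rfloor> \<and> z \<ge> 0 \<and>
            (1 - 2 ^ n) * x + (2 * int j - 1) * 2 ^ nat y = (2 * int k - 1) * 2 ^ nat z"
  then obtain x y z :: int where x: "x > 0" and y0: "0 \<le> y"
    and yl: "y < \<lfloor>log 2 ((real m - 1) / (2 * real j - 1))\<rfloor>" and z: "z \<ge> 0"
    and eq: "(1 - 2 ^ n) * x + (2 * int j - 1) * 2 ^ nat y = (2 * int k - 1) * 2 ^ nat z" by blast
  have j4: "real j \<le> (real m + 1) / 4"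
    using assms(6) by (metis le_floor_iff of_int_of_nat_eq)
  hence jm: "4 * real j \<le> real m + 1" by simp
  define A where "A = (real m - 1) / (2 * real j - 1)"
  have jp: "2 * real j - 1 > 0" using assms(3) by simp
  have A1: "A > 0" unfolding A_def using jm jp assms(3) by (simp add: field_simps)
  have "real_of_int (y + 1) \<le> log 2 A" using yl unfolding A_def
    by (metis add1_zle_eq le_floor_iff)
  hence "2 powr real_of_int (y + 1) \<le> A" using A1 le_log_iff[of 2 A] by simp
  moreover have "2 powr real_of_int (y + 1) = 2 ^ (nat y + 1)"
  proof -
    have "real_of_int (y + 1) = real (nat y + 1)" using y0 by simp
    hence "2 powr real_of_int (y + 1) = 2 powr real (nat y + 1)" by (simp only:)
    also have "\<dots> = 2 ^ (nat y + 1)" by (rule powr_realpow) simp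
    finally show ?thesis .
  qed
  ultimately have "2 ^ (nat y + 1) * (2 * real j - 1) \<le> real m - 1"
    unfolding A_def using jp by (simp add: field_simps)
  hence "2 * (2 ^ nat y * (2 * real j - 1)) \<le> real m - 1" by simp
  also have "\<dots> < 2 * 2 ^ n"
  proof -
    have "real m \<le> real (2 ^ (n + 1))" using assms(5) by (simp only: of_nat_le_iff)
    thus ?thesis by simp
  qed
  finally have "real_of_int ((2 * int j - 1) * 2 ^ nat y) < 2 ^ n" by (simp add: mult.commute)
  hence L: "(2 * int j - 1) * 2 ^ nat y < 2 ^ n"
    by (metis of_int_less_iff of_int_numeral of_int_power)
  have "(2 * int k - 1) * 2 ^ nat z \<ge> 1"
  proof -
    have "2 * int k - 1 \<ge> 1" using assms(4) by simp
    moreover have "(2::int) ^ nat z \<ge> 1" by simp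
    ultimately show ?thesis by (metis mult_mono' mult_1 zero_le_one)
  qed
  moreover have "(2 ^ n - 1) * x \<ge> 2 ^ n - 1"
    proof -
    have "(2::int) ^ n - 1 \<ge> 0" by simp
    moreover have "x \<ge> 1" using x by simp
    ultimately show ?thesis by (metis mult_left_mono mult.right_neutral)
  qed
  ultimately show False using eq L by (simp add: algebra_simps)
qed

end
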